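(* Let $c\in[\frac12,1)$ and let $d,\delta$ be positive integers with $d\ge\delta$. Let $G$ be a graph with maximum degree $\delta$ and $w:V(G)\to[0,1]$ a weight function with $w(V(G))=1$, and assume $G$ has no $d$-bounded $(w,c)$-balanced separator. Then for every $v\in V(G)$ the canonical star separation for $v$ is unique (i.e. $G\setminus N[v]$ has a unique connected component of largest weight).
   Context: For $X\subseteq V(G)$, $w(X)=\sum_{x\in X}w(x)$; $N(v)$ is the neighborhood of $v$, $N[v]=N(v)\cup\{v\}$; $N^d[v]$ is the set of vertices at distance at most $d$ from $v$. A set $X$ is $d$-bounded if $X\subseteq N^d[v]$ for some $v\in V(G)$. A set $X\subseteq V(G)$ is a $(w,c)$-balanced separator if every connected component $D$ of $G\setminus X$ satisfies $w(D)\le c$. A canonical star separation for $v$ is a triple $S_v=(A_v,C_v,B_v)$ where $B_v$ is a largest-weight connected component of $G\setminus N[v]$, $C_v$ consists of $v$ together with every vertex of $N(v)$ having a neighbor in $B_v$, and $A_v=V(G)\setminus(B_v\cup C_v)$. *)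

theory Defs
  imports Complex_Main
begin

definition graph :: "'a set \<Rightarrow> ('a \<Rightarrow> 'a \<Rightarrow> bool) \<Rightarrow> bool" where
  "graph V E \<longleftrightarrow> finite V \<and> (\<forall>x y. E x y \<longrightarrow> E y x)
      \<and> (\<forall>x. \<not> E x x) \<and> (\<forall>x y. E x y \<longrightarrow> x \<in> V \<and> y \<in> V)"

definition nbhd :: "'a set \<Rightarrow> ('a \<Rightarrow> 'a \<Rightarrow> bool) \<Rightarrow> 'a \<Rightarrow> 'a set" where
  "nbhd V E v = {u \<in> V. E v u}"

definition closed_nbhd :: "'a set \<Rightarrow> ('a \<Rightarrow> 'a \<Rightarrow> bool) \<Rightarrow> 'a \<Rightarrow> 'a set" where
  "closed_nbhd V E v = insert v (nbhd V E v)"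

definition max_degree :: "'a set \<Rightarrow> ('a \<Rightarrow> 'a \<Rightarrow> bool) \<Rightarrow> nat" where
  "max_degree V E = Max ((\<lambda>v. card (nbhd V E v)) ` V)"

definition edges_in :: "('a \<Rightarrow> 'a \<Rightarrow> bool) \<Rightarrow> 'a set \<Rightarrow> ('a \<times> 'a) set" where
  "edges_in E S = {(x, y). x \<in> S \<and> y \<in> S \<and> E x y}"

definition components :: "('a \<Rightarrow> 'a \<Rightarrow> bool) \<Rightarrow> 'a set \<Rightarrow> 'a set set" where
  "components E S = {{y. (x, y) \<in> (edges_in E S)\<^sup>*} \<union> {x} | x. x \<in> S}"

definition ball_d :: "'a set \<Rightarrow> ('a \<Rightarrow> 'a \<Rightarrow> bool) \<Rightarrow> 'a \<Rightarrow> nat \<Rightarrow> 'a set" where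
  "ball_d V E v d = {u \<in> V. \<exists>k \<le> d. (v, u) \<in> (edges_in E V) ^^ k}"

definition d_bounded :: "'a set \<Rightarrow> ('a \<Rightarrow> 'a \<Rightarrow> bool) \<Rightarrow> nat \<Rightarrow> 'a set \<Rightarrow> bool" where
  "d_bounded V E d X \<longleftrightarrow> (\<exists>v \<in> V. X \<subseteq> ball_d V E v d)"

definition balanced_separator ::
  "'a set \<Rightarrow> ('a \<Rightarrow> 'a \<Rightarrow> bool) \<Rightarrow> ('a \<Rightarrow> real) \<Rightarrow> real \<Rightarrow> 'a set \<Rightarrow> bool" where
  "balanced_separator V E w c X \<longleftrightarrow> X \<subseteq> V \<and>
     (\<forall>D \<in> components E (V - X). sum w D \<le> c)"

end

theory Submission
  imports Defs
begin

lemma comp_sub: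
  assumes "C \<in> components E S" shows "C \<subseteq> S"
proof -
  obtain x where x: "x \<in> S" "C = {y. (x, y) \<in> (edges_in E S)\<^sup>*} \<union> {x}"
    using assms unfolding components_def by blast
  have "y \<in> S" if "(x, y) \<in> (edges_in E S)\<^sup>*" for y
    using that x(1) by (induction rule: rtrancl_induct) (auto simp: edges_in_def)
  then show ?thesis using x by auto
qed

lemma comp_disj:
  assumes "\<forall>x y. E x y \<longrightarrow> E y x"
    and "C \<in> components E S" "D \<in> components E S" "C \<noteq> D"
  shows "C \<inter> D = {}"
proof (rule ccontr)
  let ?R = "edges_in E S"
  have symR: "?R\<inverse> = ?R" using assms(1) unfolding edges_in_def by auto
  have sym: "(a, b) \<in> ?R\<^sup>*" if "(b, a) \<in> ?R\<^sup>*" for a b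
  proof -
    have "(a, b) \<in> (?R\<inverse>)\<^sup>*" using that by (simp add: rtrancl_converse)
    then show ?thesis using symR by simp
  qed
  obtain x where x: "C = {y. (x, y) \<in> ?R\<^sup>*}"
    using assms(2) unfolding components_def by auto
  obtain x' where x': "D = {y. (x', y) \<in> ?R\<^sup>*}"
    using assms(3) unfolding components_def by auto
  assume "C \<inter> D \<noteq> {}"
  then obtain z where "(x, z) \<in> ?R\<^sup>*" "(x', z) \<in> ?R\<^sup>*" using x x' by auto
  then have xx: "(x, x') \<in> ?R\<^sup>*" "(x', x) \<in> ?R\<^sup>*"
    using sym by (meson rtrancl_trans)+
  have "C = D" unfolding x x' using xx by (auto intro: rtrancl_trans)
  then show False using assms(4) by simp
qed

theorem lemma4p1:
  fixes V :: "'a set" and E :: "'a \<Rightarrow> 'a \<Rightarrow> bool" and w :: "'a \<Rightarrow> real"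
    and c :: real and d \<delta> :: nat
  assumes "1/2 \<le> c" and "c < 1"
    and "0 < d" and "0 < \<delta>" and "\<delta> \<le> d"
    and "graph V E"
    and "max_degree V E = \<delta>"
    and "\<forall>v \<in> V. 0 \<le> w v \<and> w v \<le> 1"
    and "sum w V = 1"
    and "\<not> (\<exists>X. d_bounded V E d X \<and> balanced_separator V E w c X)"
  shows "\<forall>v \<in> V. \<exists>!B. B \<in> components E (V - closed_nbhd V E v) \<and>
           (\<forall>D \<in> components E (V - closed_nbhd V E v). sum w D \<le> sum w B)"
proof
  fix v assume v: "v \<in> V"
  let ?X = "closed_nbhd V E v"
  let ?C = "components E (V - ?X)"
  have fin: "finite V" and symE: "\<forall>x y. E x y \<longrightarrow> E y x"
    using assms(6) unfolding graph_def by auto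
  have XV: "?X \<subseteq> V" using v unfolding closed_nbhd_def nbhd_def by auto
  have "?X \<subseteq> ball_d V E v d"
  proof
    fix u assume u: "u \<in> ?X"
    show "u \<in> ball_d V E v d"
    proof (cases "u = v")
      case True
      then show ?thesis using v unfolding ball_d_def
        by (intro CollectI conjI exI[of _ 0]) auto
    next
      case False
      then have "u \<in> V" "E v u" using u unfolding closed_nbhd_def nbhd_def by auto
      then show ?thesis using v assms(3) unfolding ball_d_def
        by (intro CollectI conjI exI[of _ 1]) (auto simp: edges_in_def)
    qed
  qed
  then have "d_bounded V E d ?X" using v unfolding d_bounded_def by blast
  then have "\<not> balanced_separator V E w c ?X" using assms(10) by blast
  then obtain D where D: "D \<in> ?C" "sum w D > c"
    using XV unfolding balanced_separator_def by force
  have wpair: "sum w A + sum w B \<le> 1" if "A \<in> ?C" "B \<in> ?C" "A \<noteq> B" for A B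
  proof -
    have sub: "A \<subseteq> V" "B \<subseteq> V" using comp_sub[OF that(1)] comp_sub[OF that(2)] by auto
    have "A \<inter> B = {}" using comp_disj[OF symE that] .
    then have "sum w A + sum w B = sum w (A \<union> B)"
      using sub fin by (simp add: sum.union_disjoint finite_subset)
    also have "\<dots> \<le> sum w V"
      using sub fin assms(8) by (intro sum_mono2) auto
    finally show ?thesis using assms(9) by simp
  qed
  show "\<exists>!B. B \<in> ?C \<and> (\<forall>D' \<in> ?C. sum w D' \<le> sum w B)"
  proof (rule ex1I[of _ D])
    show "D \<in> ?C \<and> (\<forall>D' \<in> ?C. sum w D' \<le> sum w D)"
    proof (intro conjI ballI)
      fix D' assume "D' \<in> ?C"
      then show "sum w D' \<le> sum w D"
        using wpair[of D' D] D assms(1) by (cases "D' = D") auto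
    qed (rule D(1))
  next
    fix B assume B: "B \<in> ?C \<and> (\<forall>D' \<in> ?C. sum w D' \<le> sum w B)"
    then have "sum w D \<le> sum w B" using D by blast
    then show "B = D" using wpair[of B D] B D assms(1) by (cases "B = D") auto
  qed
qed

end
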